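(* For every $a\in\{1,\dots,n\}$, the following identities hold in $\mathrm{Cl}_q(n,k)$: \[ \psi_a \omega_a^{2k} = q^{-2k}\psi_a,\qquad \psi_a^*\omega_a^{2k}=\psi_a^*,\qquad \omega_a^{-k} = (q^{2k}+1)\omega_a^k - q^{2k}\omega_a^{3k}. \]
   Context: Let $\mathbb{k}$ be a field of characteristic different from $2$, let $q\in\mathbb{k}^\times$, and let $n,k$ be positive integers. The quantum Clifford algebra $\mathrm{Cl}_q(n,k)$ is the unital associative $\mathbb{k}$-algebra generated by $\psi_a,\psi_a^*,\omega_a,\omega_a^{-1}$ for $a\in\{1,\dots,n\}$, subject to the relations (for all $a,b\in\{1,\dots,n\}$): $\omega_a\omega_b=\omega_b\omega_a$; $\omega_a\omega_a^{-1}=1$; $\omega_a\psi_b=q^{\delta_{ab}}\psi_b\omega_a$; $\omega_a\psi_b^*=q^{-\delta_{ab}}\psi_b^*\omega_a$; $\psi_a\psi_b+\psi_b\psi_a=0$; $\psi_a^*\psi_b^*+\psi_b^*\psi_a^*=0$; $\psi_a\psi_a^*+q^k\psi_a^*\psi_a=\omega_a^{-k}$; $\psi_a\psi_a^*+q^{-k}\psi_a^*\psi_a=\omega_a^{k}$; and $\psi_a\psi_b^*+\psi_b^*\psi_a=0$ if $a\neq b$. *)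

theory Defs
  imports Main
begin

text \<open>A unital associative algebra over a field 'f is modelled as a ring 'a together
with a unital ring homomorphism from 'f into the centre of 'a.\<close>

definition central_hom :: "('f::field \<Rightarrow> 'a::ring_1) \<Rightarrow> bool" where
  "central_hom e \<longleftrightarrow> e 0 = 0 \<and> e 1 = 1 \<and>
     (\<forall>x y. e (x + y) = e x + e y) \<and> (\<forall>x y. e (x * y) = e x * e y) \<and>
     (\<forall>x z. e x * z = z * e x)"

text \<open>The defining relations of the quantum Clifford algebra Cl_q(n,k), for elements
psi a, psis a (= psi_a^*), om a (= omega_a), omi a (= omega_a^{-1}), a in {1..n}.\<close>

definition clq_rels ::
  "('f::field \<Rightarrow> 'a::ring_1) \<Rightarrow> 'f \<Rightarrow> nat \<Rightarrow> nat \<Rightarrow>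
   (nat \<Rightarrow> 'a) \<Rightarrow> (nat \<Rightarrow> 'a) \<Rightarrow> (nat \<Rightarrow> 'a) \<Rightarrow> (nat \<Rightarrow> 'a) \<Rightarrow> bool" where
  "clq_rels e q n k psi psis om omi \<longleftrightarrow>
     (\<forall>a\<in>{1..n}. \<forall>b\<in>{1..n}.
        om a * om b = om b * om a \<and>
        om a * omi a = 1 \<and>
        om a * psi b = e (if a = b then q else 1) * psi b * om a \<and>
        om a * psis b = e (if a = b then inverse q else 1) * psis b * om a \<and>
        psi a * psi b + psi b * psi a = 0 \<and>
        psis a * psis b + psis b * psis a = 0 \<and>
        psi a * psis a + e (q ^ k) * psis a * psi a = omi a ^ k \<and>
        psi a * psis a + e (inverse q ^ k) * psis a * psi a = om a ^ k \<and>
        (a \<noteq> b \<longrightarrow> psi a * psis b + psis b * psi a = 0))"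

end

theory Submission
  imports Defs
begin

theorem lemma3p2:
  fixes e :: "'f::field \<Rightarrow> 'a::ring_1" and q :: 'f and n k :: nat
    and psi psis om omi :: "nat \<Rightarrow> 'a"
  assumes "(2::'f) \<noteq> 0" and "q \<noteq> 0" and "n \<ge> 1" and "k \<ge> 1"
    and "central_hom e"
    and "clq_rels e q n k psi psis om omi"
    and "a \<in> {1..n}"
  shows "psi a * om a ^ (2 * k) = e (inverse q ^ (2 * k)) * psi a
       \<and> psis a * om a ^ (2 * k) = psis a
       \<and> omi a ^ k = e (q ^ (2 * k) + 1) * om a ^ k - e (q ^ (2 * k)) * om a ^ (3 * k)"
proof -
  define P where "P = psi a"
  define S where "S = psis a"
  define W where "W = om a ^ k"
  define V where "V = omi a ^ k"
  define A where "A = P * S"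
  define B where "B = S * P"
  define r where "r = e (inverse q ^ k)"
  define s where "s = e (q ^ k)"
  have e1: "e 1 = 1" and emul: "\<And>x y. e (x * y) = e x * e y"
    and eadd: "\<And>x y. e (x + y) = e x + e y"
    and ec: "\<And>x z. e x * z = z * e x" using assms(5) unfolding central_hom_def by blast+
  have cm: "\<And>c x y. x * (e c * y) = e c * (x * y)"
    by (metis ec mult.assoc)
  have R: "om a * omi a = 1"
    "psi a * psi a + psi a * psi a = 0"
    "psis a * psis a + psis a * psis a = 0"
    "psi a * psis a + e (q ^ k) * psis a * psi a = omi a ^ k"
    "psi a * psis a + e (inverse q ^ k) * psis a * psi a = om a ^ k"
    using assms(6,7) unfolding clq_rels_def by blast+
  have two: "\<And>x::'a. x + x = 0 \<Longrightarrow> x = 0"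
  proof -
    fix x :: 'a assume "x + x = 0"
    have e2: "e 2 = 2" using eadd[of 1 1] e1 by (metis one_add_one)
    have "e 2 * x = x + x" unfolding e2 by (rule mult_2)
    hence "e (inverse 2) * (e 2 * x) = 0" using \<open>x + x = 0\<close> by (metis mult_zero_right)
    hence "e (inverse 2 * 2) * x = 0" by (simp only: emul mult.assoc)
    thus "x = 0" using assms(1) e1 by simp
  qed
  have PP: "P * P = 0" using two R(2) P_def by blast
  have SS: "S * S = 0" using two R(3) S_def by blast
  have hV: "A + s * B = V" using R(4) unfolding A_def B_def s_def V_def P_def S_def by (simp add: mult.assoc)
  have hW: "A + r * B = W" using R(5) unfolding A_def B_def r_def W_def P_def S_def by (simp add: mult.assoc)
  have rs: "r * s = 1" "s * r = 1" unfolding r_def s_def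
    using assms(2) e1 by (simp_all add: emul[symmetric] power_mult_distrib[symmetric])
  have AB: "A * B = 0" unfolding A_def B_def by (metis SS mult.assoc mult_zero_left mult_zero_right)
  have BA: "B * A = 0" unfolding A_def B_def by (metis PP mult.assoc mult_zero_left mult_zero_right)
  have WVm: "\<And>m. om a ^ m * omi a ^ m = 1"
  proof -
    fix m show "om a ^ m * omi a ^ m = 1"
    proof (induction m)
      case (Suc m)
      have "om a ^ Suc m * omi a ^ Suc m = om a ^ m * (om a * omi a) * omi a ^ m"
        by (simp only: power_Suc2[of "om a"] power_Suc[of "omi a"] mult.assoc)
      thus ?case using Suc R(1) by simp
    qed simp
  qed
  have WV: "W * V = 1" using WVm W_def V_def by simp
  have rc: "\<And>z. r * z = z * r" and sc: "\<And>z. s * z = z * s" unfolding r_def s_def by (rule ec)+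
  have WV2: "W * V = A * A + B * B"
  proof -
    have "W * V = A*A + A*(s*B) + (r*B)*A + (r*B)*(s*B)" unfolding hV[symmetric] hW[symmetric]
      by (simp add: distrib_left distrib_right add_ac)
    moreover have "A*(s*B) = s*(A*B)" by (metis mult.assoc sc)
    moreover have "(r*B)*A = r*(B*A)" by (rule mult.assoc)
    moreover have "(r*B)*(s*B) = (r*s)*(B*B)" by (metis mult.assoc sc)
    ultimately show ?thesis using AB BA rs by simp
  qed
  have VW2: "V * W = A * A + B * B"
  proof -
    have "V * W = A*A + A*(r*B) + (s*B)*A + (s*B)*(r*B)" unfolding hV[symmetric] hW[symmetric]
      by (simp add: distrib_left distrib_right add_ac)
    moreover have "A*(r*B) = r*(A*B)" by (metis mult.assoc rc)
    moreover have "(s*B)*A = s*(B*A)" by (rule mult.assoc)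
    moreover have "(s*B)*(r*B) = (s*r)*(B*B)" by (metis mult.assoc rc)
    ultimately show ?thesis using AB BA rs by simp
  qed
  have VW: "V * W = 1" using WV WV2 VW2 by simp
  have W2: "om a ^ (2 * k) = W * W" by (simp add: W_def mult_2 power_add)
  have W3: "om a ^ (3 * k) = W * W * W" by (simp add: W_def numeral_3_eq_3 power_add mult.assoc)
  have rr: "e (inverse q ^ (2 * k)) = r * r" by (simp add: r_def mult_2 power_add emul)
  have ss: "e (q ^ (2 * k)) = s * s" by (simp add: s_def mult_2 power_add emul)
  have ss1: "e (q ^ (2 * k) + 1) = s * s + 1" by (simp add: ss eadd e1)
  define X where "X = P * S * P"
  have PW: "P * W = r * X"
  proof -
    have "P * W = P*P*S + P*(r*B)" unfolding hW[symmetric] A_def by (simp only: distrib_left mult.assoc)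
    moreover have "P*(r*B) = r * X" unfolding X_def B_def by (metis mult.assoc rc)
    ultimately show ?thesis using PP by simp
  qed
  have PV: "P * V = s * X"
  proof -
    have "P * V = P*P*S + P*(s*B)" unfolding hV[symmetric] A_def by (simp only: distrib_left mult.assoc)
    moreover have "P*(s*B) = s * X" unfolding X_def B_def by (metis mult.assoc sc)
    ultimately show ?thesis using PP by simp
  qed
  have PW': "P * W = r * r * (P * V)"
    unfolding PW PV by (metis mult.assoc rs(1) mult_1_right)
  have c1': "P * (W * W) = r * r * P" by (metis PW' mult.assoc VW mult_1_right)
  have c1: "psi a * om a ^ (2 * k) = e (inverse q ^ (2 * k)) * psi a"
    unfolding W2 rr P_def[symmetric] by (rule c1')
  have SW: "S * W = S * V"
  proof -
    have "S * W = S*P*S + S*(r*B)" unfolding hW[symmetric] A_def by (simp only: distrib_left mult.assoc)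
    moreover have "S * V = S*P*S + S*(s*B)" unfolding hV[symmetric] A_def by (simp only: distrib_left mult.assoc)
    moreover have "S*(r*B) = r*(S*S*P)" unfolding B_def by (metis mult.assoc rc)
    moreover have "S*(s*B) = s*(S*S*P)" unfolding B_def by (metis mult.assoc sc)
    ultimately show ?thesis using SS by simp
  qed
  have c2': "S * (W * W) = S" by (metis SW mult.assoc VW mult_1_right)
  have c2: "psis a * om a ^ (2 * k) = psis a"
    unfolding W2 S_def[symmetric] by (rule c2')
  have AABB: "A * A + B * B = 1" using VW VW2 by simp
  have AAA: "A * A * A = A"
  proof -
    have "A * A = 1 - B * B" using AABB by (simp add: eq_diff_eq)
    hence "A * A * A = (1 - B * B) * A" by simp
    hence "A * A * A = A - B * B * A" by (simp add: left_diff_distrib)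
    thus ?thesis by (simp add: mult.assoc BA)
  qed
  have BBB: "B * B * B = B"
  proof -
    have "B * B = 1 - A * A" using AABB by (simp add: eq_diff_eq add.commute)
    hence "B * B * B = (1 - A * A) * B" by simp
    hence "B * B * B = B - A * A * B" by (simp add: left_diff_distrib)
    thus ?thesis by (simp add: mult.assoc AB)
  qed
  have WW: "W * W = A * A + r * r * (B * B)"
  proof -
    have "W * W = A*A + A*(r*B) + (r*B)*A + (r*B)*(r*B)" unfolding hW[symmetric]
      by (simp add: distrib_left distrib_right add_ac)
    moreover have "A*(r*B) = r*(A*B)" by (metis mult.assoc rc)
    moreover have "(r*B)*A = r*(B*A)" by (rule mult.assoc)
    moreover have "(r*B)*(r*B) = r*r*(B*B)" by (metis mult.assoc rc)
    ultimately show ?thesis using AB BA by simp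
  qed
  have WWW: "W * W * W = A + r * r * r * B"
  proof -
    have "W * W * W = (A*A + r*r*(B*B)) * (A + r*B)" using WW hW by simp
    also have "\<dots> = A*A*A + A*A*(r*B) + (r*r*(B*B))*A + (r*r*(B*B))*(r*B)"
      by (simp add: distrib_left distrib_right add_ac)
    finally have "W * W * W = A*A*A + A*A*(r*B) + (r*r*(B*B))*A + (r*r*(B*B))*(r*B)" .
    moreover have "A*A*(r*B) = r*(A*(A*B))" by (metis mult.assoc rc)
    moreover have "(r*r*(B*B))*A = r*r*(B*(B*A))" by (metis mult.assoc)
    moreover have "(r*r*(B*B))*(r*B) = r*r*r*(B*B*B)" by (metis mult.assoc rc)
    ultimately show ?thesis using AB BA AAA BBB by simp
  qed
  have ssr: "s * s * r = s" by (simp add: mult.assoc rs)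
  have ssrrr: "s * s * (r * r * r) = r" by (simp add: mult.assoc rs) (simp add: mult.assoc[symmetric] rs)
  have c3: "V = (s * s + 1) * W - s * s * (W * W * W)"
  proof -
    have "(s * s + 1) * W - s * s * (W * W * W) = (s * s + 1) * (A + r * B) - s * s * (A + r * r * r * B)"
      using WWW hW by simp
    also have "\<dots> = s * s * A + s * s * (r * B) + A + r * B - s * s * A - s * s * (r * r * r * B)"
      by (simp add: distrib_left distrib_right)
    also have "s * s * (r * B) = s * B" using ssr by (simp only: mult.assoc[symmetric])
    also have "s * s * (r * r * r * B) = r * B" using ssrrr by (simp only: mult.assoc[symmetric])
    finally show ?thesis using hV by (simp add: add.commute)
  qed
  show ?thesis using c1 c2 c3 unfolding W3 ss ss1 V_def W_def by simp
qed

end
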